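(* Fix an RWA-P instance and weights $\alpha,\beta>0$ (setting as in the context). For an integer $k$, let $f_\alpha^{\max}(k)=\max\{f_\alpha(x,y): (x,y)\text{ feasible},\ f_\beta(x)=k\}$ and $f_\alpha^{\min}(k)=\min\{f_\alpha(x,y): (x,y)\text{ feasible},\ f_\beta(x)=k\}$. Define $$\Omega^{>}=\max\left\{\frac{f_\alpha^{\max}(f_\beta(\hat x))-f_\alpha^{\min}(f_\beta(\tilde x))}{f_\beta(\hat x)-f_\beta(\tilde x)}:\ (\hat x,\hat y),(\tilde x,\tilde y)\text{ feasible},\ f_\beta(\hat x)>f_\beta(\tilde x)\right\},$$ and let $\Omega^{=}$ be the same maximum taken only over feasible pairs with $f_\beta(\hat x)=f_\beta(\tilde x)+1$. Then $\Omega^{>}=\Omega^{=}$. Consequently, if $\alpha,\beta>0$ satisfy $\beta/\alpha>\Omega^{=}$, then for every pair of feasible solutions $(\hat x,\hat y)$, $(\tilde x,\tilde y)$ with $f_\beta(\hat x)>f_\beta(\tilde x)$ we have $f(\hat x,\hat y)<f(\tilde x,\tilde y)$.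
   Context: An RWA-P instance consists of: a directed graph $G=(V,E)$ (parallel arcs allowed), whose arcs are called links; a finite set $\Lambda$ of wavelengths; a finite set $R$ of requests, each request $r$ having a source node $s^r$ and a distinct destination node $t^r$; and for each $r\in R$ finite sets $W^r$ (working lightpaths) and $P^r$ (protection lightpaths). Each lightpath $\ell$ of request $r$ is a directed path in $G$ from $s^r$ to $t^r$ together with a wavelength $\Lambda[\ell]\in\Lambda$; $E[\ell]$ denotes its set of links and its length is $B^r_\ell=|E[\ell]|\ge 1$. Conflict sets: $\mathcal C_1=\{(r,w,p): r\in R, w\in W^r,p\in P^r, E[w]\cap E[p]\ne\emptyset\}$; $\mathcal C_2=\{(r_1,r_2,w,p): r_1\ne r_2, w\in W^{r_1}, p\in P^{r_2}, \Lambda[w]=\Lambda[p], E[w]\cap E[p]\neq\emptyset\}$; $\mathcal C_3=\{(r_1,r_2,w_1,w_2): w_1\in W^{r_1}, w_2\in W^{r_2}, (r_1,w_1)\ne(r_2,w_2), \Lambda[w_1]=\Lambda[w_2], E[w_1]\cap E[w_2]\ne\emptyset\}$; $\mathcal C_4=\{(r_1,r_2,p_1,p_2): p_1\in P^{r_1}, p_2\in P^{r_2}, (r_1,p_1)\ne(r_2,p_2), \Lambda[p_1]=\Lambda[p_2], E[p_1]\cap E[p_2]\ne\emptyset\}$. A solution is a pair of binary vectors $x=(x^r_w)_{r\in R,w\in W^r}$, $y=(y^r_p)_{r\in R,p\in P^r}$; it is feasible if $\sum_{w\in W^r}x^r_w=\sum_{p\in P^r}y^r_p$ and $\sum_{w\in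 W^r}x^r_w\le 1$ for all $r$, $x^r_w+y^r_p\le1$ for $(r,w,p)\in\mathcal C_1$, $x^{r_1}_w+y^{r_2}_p\le1$ for $(r_1,r_2,w,p)\in\mathcal C_2$, $x^{r_1}_{w_1}+x^{r_2}_{w_2}\le1$ for $\mathcal C_3$, $y^{r_1}_{p_1}+y^{r_2}_{p_2}\le 1$ for $\mathcal C_4$. Define link usage $f_\alpha(x,y)=\sum_{r}\big(\sum_{w\in W^r}B^r_wx^r_w+\sum_{p\in P^r}B^r_py^r_p\big)$, number of granted requests $f_\beta(x)=\sum_r\sum_{w\in W^r}x^r_w$, and objective $f(x,y)=\alpha f_\alpha(x,y)-\beta f_\beta(x)$. *)

theory Defs
  imports Main "HOL.Real"
begin

text \<open>Nodes of type 'v, links (arcs, parallel arcs allowed) of type 'e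
  with tail/head maps, wavelengths 'w, requests 'r, lightpaths 'p. A lightpath is given by
  the list of its links (a directed path) together with its wavelength.\<close>

record ('v, 'e, 'w, 'r, 'p) rwa =
  nodes :: "'v set"
  links :: "'e set"
  ltail :: "'e \<Rightarrow> 'v"
  lhead :: "'e \<Rightarrow> 'v"
  wls   :: "'w set"
  reqs  :: "'r set"
  src   :: "'r \<Rightarrow> 'v"
  dst   :: "'r \<Rightarrow> 'v"
  Wlp   :: "'r \<Rightarrow> 'p set"
  Plp   :: "'r \<Rightarrow> 'p set"
  arcs  :: "'p \<Rightarrow> 'e list"
  lam   :: "'p \<Rightarrow> 'w"

definition is_dpath :: "('v, 'e, 'w, 'r, 'p) rwa \<Rightarrow> 'v \<Rightarrow> 'v \<Rightarrow> 'e list \<Rightarrow> bool" where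
  "is_dpath I s t es \<longleftrightarrow>
     es \<noteq> [] \<and> set es \<subseteq> links I \<and>
     ltail I (hd es) = s \<and> lhead I (last es) = t \<and>
     (\<forall>i. Suc i < length es \<longrightarrow> lhead I (es ! i) = ltail I (es ! Suc i)) \<and>
     distinct (map (ltail I) es @ [lhead I (last es)])"

definition Elp :: "('v, 'e, 'w, 'r, 'p) rwa \<Rightarrow> 'p \<Rightarrow> 'e set" where
  "Elp I l = set (arcs I l)"

definition Blp :: "('v, 'e, 'w, 'r, 'p) rwa \<Rightarrow> 'p \<Rightarrow> nat" where
  "Blp I l = card (Elp I l)"

definition valid_instance :: "('v, 'e, 'w, 'r, 'p) rwa \<Rightarrow> bool" where
  "valid_instance I \<longleftrightarrow>
     finite (nodes I) \<and> finite (links I) \<and>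
     (\<forall>e\<in>links I. ltail I e \<in> nodes I \<and> lhead I e \<in> nodes I) \<and>
     finite (wls I) \<and> finite (reqs I) \<and>
     (\<forall>r\<in>reqs I. src I r \<in> nodes I \<and> dst I r \<in> nodes I \<and> src I r \<noteq> dst I r \<and>
        finite (Wlp I r) \<and> finite (Plp I r) \<and>
        (\<forall>l\<in>Wlp I r \<union> Plp I r. is_dpath I (src I r) (dst I r) (arcs I l) \<and> lam I l \<in> wls I))"

definition feasible :: "('v, 'e, 'w, 'r, 'p) rwa \<Rightarrow> ('r \<Rightarrow> 'p \<Rightarrow> nat) \<Rightarrow> ('r \<Rightarrow> 'p \<Rightarrow> nat) \<Rightarrow> bool" where
  "feasible I x y \<longleftrightarrow>
     (\<forall>r\<in>reqs I. (\<forall>w\<in>Wlp I r. x r w \<in> {0, 1}) \<and> (\<forall>p\<in>Plp I r. y r p \<in> {0, 1}) \<and>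
        (\<Sum>w\<in>Wlp I r. x r w) = (\<Sum>p\<in>Plp I r. y r p) \<and> (\<Sum>w\<in>Wlp I r. x r w) \<le> 1) \<and>
     (\<forall>r\<in>reqs I. \<forall>w\<in>Wlp I r. \<forall>p\<in>Plp I r.
        Elp I w \<inter> Elp I p \<noteq> {} \<longrightarrow> x r w + y r p \<le> 1) \<and>
     (\<forall>r1\<in>reqs I. \<forall>r2\<in>reqs I. \<forall>w\<in>Wlp I r1. \<forall>p\<in>Plp I r2.
        r1 \<noteq> r2 \<and> lam I w = lam I p \<and> Elp I w \<inter> Elp I p \<noteq> {} \<longrightarrow> x r1 w + y r2 p \<le> 1) \<and>
     (\<forall>r1\<in>reqs I. \<forall>r2\<in>reqs I. \<forall>w1\<in>Wlp I r1. \<forall>w2\<in>Wlp I r2.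
        (r1, w1) \<noteq> (r2, w2) \<and> lam I w1 = lam I w2 \<and> Elp I w1 \<inter> Elp I w2 \<noteq> {} \<longrightarrow>
        x r1 w1 + x r2 w2 \<le> 1) \<and>
     (\<forall>r1\<in>reqs I. \<forall>r2\<in>reqs I. \<forall>p1\<in>Plp I r1. \<forall>p2\<in>Plp I r2.
        (r1, p1) \<noteq> (r2, p2) \<and> lam I p1 = lam I p2 \<and> Elp I p1 \<inter> Elp I p2 \<noteq> {} \<longrightarrow>
        y r1 p1 + y r2 p2 \<le> 1)"

definition f_alpha :: "('v, 'e, 'w, 'r, 'p) rwa \<Rightarrow> ('r \<Rightarrow> 'p \<Rightarrow> nat) \<Rightarrow> ('r \<Rightarrow> 'p \<Rightarrow> nat) \<Rightarrow> real" where
  "f_alpha I x y = (\<Sum>r\<in>reqs I. (\<Sum>w\<in>Wlp I r. real (Blp I w) * real (x r w))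
                                 + (\<Sum>p\<in>Plp I r. real (Blp I p) * real (y r p)))"

definition f_beta :: "('v, 'e, 'w, 'r, 'p) rwa \<Rightarrow> ('r \<Rightarrow> 'p \<Rightarrow> nat) \<Rightarrow> int" where
  "f_beta I x = (\<Sum>r\<in>reqs I. \<Sum>w\<in>Wlp I r. int (x r w))"

definition f_obj :: "('v, 'e, 'w, 'r, 'p) rwa \<Rightarrow> real \<Rightarrow> real \<Rightarrow> ('r \<Rightarrow> 'p \<Rightarrow> nat) \<Rightarrow> ('r \<Rightarrow> 'p \<Rightarrow> nat) \<Rightarrow> real" where
  "f_obj I \<alpha> \<beta> x y = \<alpha> * f_alpha I x y - \<beta> * real_of_int (f_beta I x)"

definition fa_max :: "('v, 'e, 'w, 'r, 'p) rwa \<Rightarrow> int \<Rightarrow> real" where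
  "fa_max I k = Max {f_alpha I x y | x y. feasible I x y \<and> f_beta I x = k}"

definition fa_min :: "('v, 'e, 'w, 'r, 'p) rwa \<Rightarrow> int \<Rightarrow> real" where
  "fa_min I k = Min {f_alpha I x y | x y. feasible I x y \<and> f_beta I x = k}"

definition Omega_gt :: "('v, 'e, 'w, 'r, 'p) rwa \<Rightarrow> real" where
  "Omega_gt I = Max {(fa_max I (f_beta I x1) - fa_min I (f_beta I x2))
                       / real_of_int (f_beta I x1 - f_beta I x2) | x1 y1 x2 y2.
                     feasible I x1 y1 \<and> feasible I x2 y2 \<and> f_beta I x1 > f_beta I x2}"

definition Omega_eq :: "('v, 'e, 'w, 'r, 'p) rwa \<Rightarrow> real" where
  "Omega_eq I = Max {(fa_max I (f_beta I x1) - fa_min I (f_beta I x2))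
                       / real_of_int (f_beta I x1 - f_beta I x2) | x1 y1 x2 y2.
                     feasible I x1 y1 \<and> feasible I x2 y2 \<and> f_beta I x1 = f_beta I x2 + 1}"

end

theory Submission
  imports Defs "HOL-Library.FuncSet"
begin

lemma feasible_mono:
  assumes f: "feasible I x y" and lx: "\<And>r p. x' r p \<le> x r p" and ly: "\<And>r p. y' r p \<le> y r p"
    and eq: "\<And>r. r \<in> reqs I \<Longrightarrow> (\<Sum>w\<in>Wlp I r. x' r w) = (\<Sum>p\<in>Plp I r. y' r p)"
  shows "feasible I x' y'"
proof -
  have a: "x' r w \<in> {0,1}" if "x r w \<in> {0,1}" for r w using lx[of r w] that by auto
  have b: "y' r w \<in> {0,1}" if "y r w \<in> {0,1}" for r w using ly[of r w] that by auto
  have c: "(\<Sum>w\<in>Wlp I r. x' r w) \<le> (\<Sum>w\<in>Wlp I r. x r w)" for r by (intro sum_mono lx)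
  have d: "u + v \<le> (1::nat)" if "u' + v' \<le> 1" "u \<le> u'" "v \<le> v'" for u v u' v' using that by linarith
  show ?thesis using f unfolding feasible_def
    apply (intro conjI)
    subgoal using a b c eq by (meson le_trans)
    subgoal using d lx ly by meson
    subgoal using d lx ly by meson
    subgoal using d lx ly by meson
    subgoal using d lx ly by meson
    done
qed

lemma drop_feasible:
  assumes "feasible I x y"
  shows "feasible I (\<lambda>r. if r \<in> D then (\<lambda>_. 0) else x r) (\<lambda>r. if r \<in> D then (\<lambda>_. 0) else y r)"
proof (rule feasible_mono[OF assms])
  fix r assume "r \<in> reqs I"
  then show "(\<Sum>w\<in>Wlp I r. (if r \<in> D then (\<lambda>_. 0) else x r) w) = (\<Sum>p\<in>Plp I r. (if r \<in> D then (\<lambda>_. 0) else y r) p)"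
    using assms unfolding feasible_def by auto
qed auto

lemma feasD:
  assumes "feasible I x y" "r \<in> reqs I"
  shows "(\<forall>w\<in>Wlp I r. x r w \<in> {0,1}) \<and> (\<forall>p\<in>Plp I r. y r p \<in> {0,1}) \<and>
        (\<Sum>w\<in>Wlp I r. x r w) = (\<Sum>p\<in>Plp I r. y r p) \<and> (\<Sum>w\<in>Wlp I r. x r w) \<le> 1"
proof -
  have "\<forall>r\<in>reqs I. (\<forall>w\<in>Wlp I r. x r w \<in> {0,1}) \<and> (\<forall>p\<in>Plp I r. y r p \<in> {0,1}) \<and>
        (\<Sum>w\<in>Wlp I r. x r w) = (\<Sum>p\<in>Plp I r. y r p) \<and> (\<Sum>w\<in>Wlp I r. x r w) \<le> 1"
    using assms(1) unfolding feasible_def by (rule conjunct1)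
  then show ?thesis using assms(2) by (rule bspec)
qed

lemma fb_range:
  assumes "feasible I x y"
  shows "0 \<le> f_beta I x \<and> f_beta I x \<le> int (card (reqs I))"
proof -
  have eq: "f_beta I x = int (\<Sum>r\<in>reqs I. \<Sum>w\<in>Wlp I r. x r w)"
    unfolding f_beta_def by (simp add: of_nat_sum)
  have "(\<Sum>r\<in>reqs I. \<Sum>w\<in>Wlp I r. x r w) \<le> (\<Sum>r\<in>reqs I. 1)"
    using feasD[OF assms] by (intro sum_mono) blast
  then have "int (\<Sum>r\<in>reqs I. \<Sum>w\<in>Wlp I r. x r w) \<le> int (card (reqs I))" by (metis card_eq_sum of_nat_le_iff)
  then show ?thesis unfolding eq by linarith
qed

lemma step_down:
  assumes v: "valid_instance I" and f: "feasible I x y" and k: "f_beta I x = k + 1" and k0: "0 \<le> k"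
  shows "\<exists>x' y'. feasible I x' y' \<and> f_beta I x' = k"
proof -
  have fin: "finite (reqs I)" using v unfolding valid_instance_def by auto
  have "\<exists>r\<in>reqs I. (\<Sum>w\<in>Wlp I r. x r w) \<noteq> 0"
  proof (rule ccontr)
    assume "\<not> ?thesis"
    then have "f_beta I x = 0" unfolding f_beta_def
      by (simp add: of_nat_sum[symmetric])
    then show False using k k0 by simp
  qed
  then obtain r where r: "r \<in> reqs I" "(\<Sum>w\<in>Wlp I r. x r w) \<noteq> 0" by blast
  have "(\<Sum>w\<in>Wlp I r. x r w) \<le> 1" using feasD[OF f r(1)] by blast
  then have one: "(\<Sum>w\<in>Wlp I r. x r w) = 1" using r(2) by linarith
  define x' where "x' = (\<lambda>q. if q \<in> {r} then (\<lambda>_. 0::nat) else x q)"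
  define y' where "y' = (\<lambda>q. if q \<in> {r} then (\<lambda>_. 0::nat) else y q)"
  have F: "feasible I x' y'" unfolding x'_def y'_def by (rule drop_feasible[OF f])
  have e1: "f_beta I x = (\<Sum>w\<in>Wlp I r. int (x r w)) + (\<Sum>q\<in>reqs I - {r}. \<Sum>w\<in>Wlp I q. int (x q w))"
    unfolding f_beta_def using fin r(1) by (rule sum.remove)
  have e2: "f_beta I x' = (\<Sum>w\<in>Wlp I r. int (x' r w)) + (\<Sum>q\<in>reqs I - {r}. \<Sum>w\<in>Wlp I q. int (x' q w))"
    unfolding f_beta_def using fin r(1) by (rule sum.remove)
  have "(\<Sum>w\<in>Wlp I r. int (x r w)) = 1" using one by (simp add: of_nat_sum[symmetric])
  moreover have "(\<Sum>q\<in>reqs I - {r}. \<Sum>w\<in>Wlp I q. int (x' q w)) = (\<Sum>q\<in>reqs I - {r}. \<Sum>w\<in>Wlp I q. int (x q w))"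
    unfolding x'_def by (intro sum.cong) auto
  moreover have "(\<Sum>w\<in>Wlp I r. int (x' r w)) = 0" unfolding x'_def by simp
  ultimately have "f_beta I x' = k" using e1 e2 k by simp
  with F show ?thesis by blast
qed

lemma down:
  assumes v: "valid_instance I" and f: "feasible I x y" and j: "0 \<le> j" "j \<le> f_beta I x"
  shows "\<exists>x' y'. feasible I x' y' \<and> f_beta I x' = j"
proof -
  have "\<forall>x y. feasible I x y \<longrightarrow> f_beta I x = j + int n \<longrightarrow> (\<exists>x' y'. feasible I x' y' \<and> f_beta I x' = j)" for n
  proof (induction n)
    case 0 then show ?case by auto
  next
    case (Suc n)
    show ?case
    proof (intro allI impI)
      fix x y assume "feasible I x y" "f_beta I x = j + int (Suc n)"
      then have "\<exists>x' y'. feasible I x' y' \<and> f_beta I x' = j + int n"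
        using step_down[OF v, of x y "j + int n"] j by simp
      then show "\<exists>x' y'. feasible I x' y' \<and> f_beta I x' = j" using Suc.IH by blast
    qed
  qed
  moreover have "f_beta I x = j + int (nat (f_beta I x - j))" using j by simp
  ultimately show ?thesis using f by blast
qed

lemma fa_finite:
  assumes v: "valid_instance I"
  shows "finite {f_alpha I x y | x y. feasible I x y}"
proof -
  define SW where "SW = Sigma (reqs I) (Wlp I)"
  define SP where "SP = Sigma (reqs I) (Plp I)"
  have fSW: "finite SW" "finite SP" using v unfolding SW_def SP_def valid_instance_def by auto
  define F where "F = PiE SW (\<lambda>_. {0::nat,1}) \<times> PiE SP (\<lambda>_. {0::nat,1})"
  have fF: "finite F" unfolding F_def using fSW by (simp add: finite_PiE)
  define \<phi> where "\<phi> = (\<lambda>(g,h). f_alpha I (\<lambda>r w. if (r,w) \<in> SW then g (r,w) else 0)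
                               (\<lambda>r p. if (r,p) \<in> SP then h (r,p) else 0))"
  have "{f_alpha I x y | x y. feasible I x y} \<subseteq> \<phi> ` F"
  proof
    fix z assume "z \<in> {f_alpha I x y | x y. feasible I x y}"
    then obtain x y where z: "z = f_alpha I x y" and f: "feasible I x y" by blast
    define g where "g = restrict (\<lambda>(r,w). x r w) SW"
    define h where "h = restrict (\<lambda>(r,w). y r w) SP"
    have gx: "x r w \<in> {0,1}" if "(r,w) \<in> SW" for r w
    proof -
      have "r \<in> reqs I" "w \<in> Wlp I r" using that unfolding SW_def by auto
      then show ?thesis using feasD[OF f] by blast
    qed
    have hy: "y r w \<in> {0,1}" if "(r,w) \<in> SP" for r w
    proof -
      have "r \<in> reqs I" "w \<in> Plp I r" using that unfolding SP_def by auto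
      then show ?thesis using feasD[OF f] by blast
    qed
    have "g \<in> PiE SW (\<lambda>_. {0::nat,1})" unfolding g_def restrict_PiE_iff using gx by auto
    moreover have "h \<in> PiE SP (\<lambda>_. {0::nat,1})" unfolding h_def restrict_PiE_iff using hy by auto
    ultimately have "(g,h) \<in> F" unfolding F_def by simp
    moreover have "\<phi> (g,h) = z"
    proof -
      have "\<phi> (g,h) = f_alpha I (\<lambda>r w. if (r,w) \<in> SW then g (r,w) else 0)
                               (\<lambda>r p. if (r,p) \<in> SP then h (r,p) else 0)" unfolding \<phi>_def by simp
      also have "\<dots> = f_alpha I x y" unfolding f_alpha_def
        by (rule sum.cong[OF refl]) (simp add: g_def h_def SW_def SP_def)
      finally show ?thesis using z by simp
    qed
    ultimately show "z \<in> \<phi> ` F" by (metis image_eqI)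
  qed
  then show ?thesis using fF finite_subset by blast
qed

definition Ach :: "('v, 'e, 'w, 'r, 'p) rwa \<Rightarrow> int \<Rightarrow> bool" where
  "Ach I k \<longleftrightarrow> (\<exists>x y. feasible I x y \<and> f_beta I x = k)"

lemma Ach_down: "valid_instance I \<Longrightarrow> Ach I k \<Longrightarrow> 0 \<le> j \<Longrightarrow> j \<le> k \<Longrightarrow> Ach I j"
  unfolding Ach_def using down by metis

lemma S_fin: "valid_instance I \<Longrightarrow> finite {f_alpha I x y | x y. feasible I x y \<and> f_beta I x = k}"
  by (rule finite_subset[OF _ fa_finite]) auto

lemma fa_bounds:
  assumes v: "valid_instance I" and f: "feasible I x y"
  shows "fa_min I (f_beta I x) \<le> f_alpha I x y \<and> f_alpha I x y \<le> fa_max I (f_beta I x)"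
proof -
  have m: "f_alpha I x y \<in> {f_alpha I u w | u w. feasible I u w \<and> f_beta I u = f_beta I x}"
    using f by blast
  show ?thesis unfolding fa_min_def fa_max_def
    using Min_le[OF S_fin[OF v, of "f_beta I x"] m] Max_ge[OF S_fin[OF v, of "f_beta I x"] m] by simp
qed

lemma min_le_max: "valid_instance I \<Longrightarrow> Ach I k \<Longrightarrow> fa_min I k \<le> fa_max I k"
  unfolding Ach_def using fa_bounds by fastforce

lemma G_fin:
  assumes v: "valid_instance I"
  shows "finite {(fa_max I (f_beta I x1) - fa_min I (f_beta I x2))
                       / real_of_int (f_beta I x1 - f_beta I x2) | x1 y1 x2 y2.
                     feasible I x1 y1 \<and> feasible I x2 y2 \<and> f_beta I x1 > f_beta I x2}"
    (is "finite ?G")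
proof -
  let ?N = "int (card (reqs I))"
  have "?G \<subseteq> (\<lambda>(k1,k2). (fa_max I k1 - fa_min I k2) / real_of_int (k1 - k2)) ` ({0..?N} \<times> {0..?N})"
  proof
    fix z assume "z \<in> ?G"
    then obtain x1 y1 x2 y2 where z: "z = (fa_max I (f_beta I x1) - fa_min I (f_beta I x2))
                       / real_of_int (f_beta I x1 - f_beta I x2)" and f: "feasible I x1 y1" "feasible I x2 y2"
      by blast
    have "(f_beta I x1, f_beta I x2) \<in> {0..?N} \<times> {0..?N}" using fb_range[OF f(1)] fb_range[OF f(2)] by auto
    then show "z \<in> (\<lambda>(k1,k2). (fa_max I k1 - fa_min I k2) / real_of_int (k1 - k2)) ` ({0..?N} \<times> {0..?N})"
      unfolding z by (rule rev_image_eqI) simp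
  qed
  then show ?thesis by (rule finite_subset) simp
qed

lemma E_sub_G:
  "{(fa_max I (f_beta I x1) - fa_min I (f_beta I x2))
                       / real_of_int (f_beta I x1 - f_beta I x2) | x1 y1 x2 y2.
                     feasible I x1 y1 \<and> feasible I x2 y2 \<and> f_beta I x1 = f_beta I x2 + 1}
   \<subseteq> {(fa_max I (f_beta I x1) - fa_min I (f_beta I x2))
                       / real_of_int (f_beta I x1 - f_beta I x2) | x1 y1 x2 y2.
                     feasible I x1 y1 \<and> feasible I x2 y2 \<and> f_beta I x1 > f_beta I x2}"
  by fastforce

lemma claim1:
  assumes v: "valid_instance I" and a: "Ach I (j+1)" "Ach I j"
  shows "fa_max I (j+1) - fa_min I j \<le> Omega_eq I"
proof -
  obtain x1 y1 x2 y2 where f: "feasible I x1 y1" "f_beta I x1 = j+1" "feasible I x2 y2" "f_beta I x2 = j"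
    using a unfolding Ach_def by blast
  let ?E = "{(fa_max I (f_beta I x1) - fa_min I (f_beta I x2))
                       / real_of_int (f_beta I x1 - f_beta I x2) | x1 y1 x2 y2.
                     feasible I x1 y1 \<and> feasible I x2 y2 \<and> f_beta I x1 = f_beta I x2 + 1}"
  have fE: "finite ?E" using finite_subset[OF E_sub_G G_fin[OF v]] .
  have "(fa_max I (f_beta I x1) - fa_min I (f_beta I x2)) / real_of_int (f_beta I x1 - f_beta I x2) \<in> ?E"
    using f by blast
  then have "(fa_max I (f_beta I x1) - fa_min I (f_beta I x2)) / real_of_int (f_beta I x1 - f_beta I x2) \<le> Omega_eq I"
    unfolding Omega_eq_def using Max_ge[OF fE] by blast
  then show ?thesis using f by simp
qed

lemma claim2:
  assumes v: "valid_instance I" and a: "Ach I k1" and k: "0 \<le> k2" "k2 < k1"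
  shows "fa_max I k1 - fa_min I k2 \<le> real_of_int (k1 - k2) * Omega_eq I"
proof -
  have "Ach I (k2 + 1 + int n) \<longrightarrow> fa_max I (k2 + 1 + int n) - fa_min I k2 \<le> real_of_int (1 + int n) * Omega_eq I" for n
  proof (induction n)
    case 0
    show ?case using claim1[OF v, of k2] Ach_down[OF v, of "k2+1" k2] k by simp
  next
    case (Suc n)
    show ?case
    proof
      assume A: "Ach I (k2 + 1 + int (Suc n))"
      let ?k = "k2 + 1 + int n"
      have A1: "Ach I ?k" using Ach_down[OF v A] k by simp
      have A2: "Ach I (?k + 1)" using A by (simp add: add_ac)
      have c1: "fa_max I (?k+1) - fa_min I ?k \<le> Omega_eq I" using claim1[OF v A2 A1] .
      have c2: "fa_min I ?k \<le> fa_max I ?k" using min_le_max[OF v A1] .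
      have c3: "fa_max I ?k - fa_min I k2 \<le> real_of_int (1 + int n) * Omega_eq I" using Suc.IH A1 by blast
      have "fa_max I (?k+1) - fa_min I k2 \<le> Omega_eq I + real_of_int (1 + int n) * Omega_eq I"
        using c1 c2 c3 by linarith
      also have "\<dots> = real_of_int (1 + int (Suc n)) * Omega_eq I" by (simp add: algebra_simps)
      finally show "fa_max I (k2 + 1 + int (Suc n)) - fa_min I k2 \<le> real_of_int (1 + int (Suc n)) * Omega_eq I"
        by (simp add: add_ac)
    qed
  qed
  from this[of "nat (k1 - k2 - 1)"] show ?thesis using a k by simp
qed

theorem proposition1:
  fixes I :: "('v, 'e, 'w, 'r, 'p) rwa" and \<alpha> \<beta> :: real
  assumes "valid_instance I" and "\<alpha> > 0" and "\<beta> > 0"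
  shows "Omega_gt I = Omega_eq I \<and>
         (\<beta> / \<alpha> > Omega_eq I \<longrightarrow>
            (\<forall>x1 y1 x2 y2. feasible I x1 y1 \<longrightarrow> feasible I x2 y2 \<longrightarrow>
               f_beta I x1 > f_beta I x2 \<longrightarrow> f_obj I \<alpha> \<beta> x1 y1 < f_obj I \<alpha> \<beta> x2 y2))"
proof -
  note v = assms(1)
  have ratio: "(fa_max I (f_beta I x1) - fa_min I (f_beta I x2)) / real_of_int (f_beta I x1 - f_beta I x2) \<le> Omega_eq I"
    if f: "feasible I x1 y1" "feasible I x2 y2" and lt: "f_beta I x1 > f_beta I x2" for x1 y1 x2 y2
  proof -
    have "Ach I (f_beta I x1)" using f unfolding Ach_def by blast
    then have "fa_max I (f_beta I x1) - fa_min I (f_beta I x2) \<le> real_of_int (f_beta I x1 - f_beta I x2) * Omega_eq I"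
      using claim2[OF v] fb_range[OF f(2)] lt by blast
    moreover have "real_of_int (f_beta I x1 - f_beta I x2) > 0" using lt by simp
    ultimately show ?thesis by (simp add: divide_le_eq mult.commute)
  qed
  define G where "G = {(fa_max I (f_beta I x1) - fa_min I (f_beta I x2))
                       / real_of_int (f_beta I x1 - f_beta I x2) | x1 y1 x2 y2.
                     feasible I x1 y1 \<and> feasible I x2 y2 \<and> f_beta I x1 > f_beta I x2}"
  define E where "E = {(fa_max I (f_beta I x1) - fa_min I (f_beta I x2))
                       / real_of_int (f_beta I x1 - f_beta I x2) | x1 y1 x2 y2.
                     feasible I x1 y1 \<and> feasible I x2 y2 \<and> f_beta I x1 = f_beta I x2 + 1}"
  have fG: "finite G" unfolding G_def by (rule G_fin[OF v])
  have EG: "E \<subseteq> G" unfolding E_def G_def by (rule E_sub_G)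
  have fE: "finite E" using finite_subset[OF EG fG] .
  have OG: "Omega_gt I = Max G" unfolding Omega_gt_def G_def ..
  have OE: "Omega_eq I = Max E" unfolding Omega_eq_def E_def ..
  have eq: "Omega_gt I = Omega_eq I"
  proof (cases "G = {}")
    case True
    then have "E = {}" using EG by blast
    then show ?thesis using True unfolding OG OE by simp
  next
    case False
    then obtain x1 y1 x2 y2 where f: "feasible I x1 y1" "feasible I x2 y2" "f_beta I x1 > f_beta I x2"
      unfolding G_def by blast
    have "Ach I (f_beta I x2 + 1)" "Ach I (f_beta I x2)"
      using Ach_down[OF v, of "f_beta I x1" "f_beta I x2 + 1"] f fb_range[OF f(2)] unfolding Ach_def by auto
    then obtain u1 v1 u2 v2 where g: "feasible I u1 v1" "feasible I u2 v2" "f_beta I u1 = f_beta I u2 + 1"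
      unfolding Ach_def by metis
    have Ene: "E \<noteq> {}" unfolding E_def using g by blast
    have "\<forall>z\<in>G. z \<le> Omega_eq I"
    proof
      fix z assume "z \<in> G"
      then obtain x1 y1 x2 y2 where "z = (fa_max I (f_beta I x1) - fa_min I (f_beta I x2))
                       / real_of_int (f_beta I x1 - f_beta I x2)" "feasible I x1 y1" "feasible I x2 y2"
                     "f_beta I x1 > f_beta I x2" unfolding G_def by blast
      then show "z \<le> Omega_eq I" using ratio by blast
    qed
    then have le1: "Omega_gt I \<le> Omega_eq I"
      unfolding OG using fG False by (simp add: Max_le_iff)
    have "Max E \<in> G" using Max_in[OF fE Ene] EG by blast
    then have "Omega_eq I \<le> Omega_gt I" unfolding Omega_eq_def Omega_gt_def E_def[symmetric] G_def[symmetric]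
      using Max_ge[OF fG] by blast
    with le1 show ?thesis by linarith
  qed
  have part2: "f_obj I \<alpha> \<beta> x1 y1 < f_obj I \<alpha> \<beta> x2 y2"
    if om: "\<beta> / \<alpha> > Omega_eq I" and f: "feasible I x1 y1" "feasible I x2 y2" and lt: "f_beta I x1 > f_beta I x2"
    for x1 y1 x2 y2
  proof -
    define d where "d = real_of_int (f_beta I x1 - f_beta I x2)"
    have d: "d > 0" unfolding d_def using lt by simp
    have "Ach I (f_beta I x1)" using f unfolding Ach_def by blast
    then have c: "fa_max I (f_beta I x1) - fa_min I (f_beta I x2) \<le> d * Omega_eq I"
      unfolding d_def using claim2[OF v] fb_range[OF f(2)] lt by blast
    have b1: "f_alpha I x1 y1 \<le> fa_max I (f_beta I x1)" using fa_bounds[OF v f(1)] by blast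
    have b2: "fa_min I (f_beta I x2) \<le> f_alpha I x2 y2" using fa_bounds[OF v f(2)] by blast
    have "f_alpha I x1 y1 - f_alpha I x2 y2 \<le> d * Omega_eq I" using b1 b2 c by linarith
    then have "\<alpha> * (f_alpha I x1 y1 - f_alpha I x2 y2) \<le> \<alpha> * (d * Omega_eq I)"
      using assms(2) by (intro mult_left_mono) auto
    moreover have "\<alpha> * Omega_eq I < \<beta>" using om assms(2) by (simp add: less_divide_eq mult.commute)
    then have "\<alpha> * (d * Omega_eq I) < \<beta> * d" using d
      by (metis mult.assoc mult.commute mult_strict_right_mono)
    ultimately have "\<alpha> * (f_alpha I x1 y1 - f_alpha I x2 y2) < \<beta> * d" by linarith
    then show ?thesis unfolding f_obj_def d_def by (simp add: algebra_simps)
  qed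
  show ?thesis using eq part2 by blast
qed

end
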